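(* Let $m\geq1$, $I\subseteq\{1,\dots,m\}$, $A\subseteq F_I(\Gamma^m)$ a basic Presburger set, and $X=\widehat A$. Then for every face $B=F_J(A)$ of $A$, its socle satisfies $\widehat B=F_{\widehat J}(\widehat A)$, which is a face of $X$ (where $\widehat J=J\setminus\{m\}$). If moreover $A$ is non-negative, then conversely for every face $Y$ of $X$ there is a face $B$ of $A$ such that $\widehat B=Y$; in that case $B=Y\times\{+\infty\}$ if $m\notin\mathrm{Supp}\,B$, and $B=(Y\times\mathcal{Z})\cap\overline A$ if $m\in\mathrm{Supp}\,B$.
   Context: $\mathcal{Z}$ is a $\mathbb{Z}$-group (linearly ordered abelian group with smallest positive element $1$, $|\mathcal{Z}/n\mathcal{Z}|=n$ for all $n\geq1$), $\mathcal{Q}$ its divisible hull, $\Gamma=\mathcal{Z}\cup\{+\infty\}$, $\Omega=\mathcal{Q}\cup\{+\infty\}$. Topology on $\Omega$ generated by open intervals and $]a,+\infty]$; product topology on $\Omega^m$; $\overline A$ is closure in $\Omega^m$ (resp. $\Omega^{m-1}$). Non-negative: all coordinates $\geq0$. $\mathrm{Supp}\,a=\{i:a_i\neq+\infty\}$, $F_I(\Gamma^m)=\{a\in\Gamma^m:\mathrm{Supp}\,a=I\}$, $F_J(A)=\{a\in\overline A:\mathrm{Supp}\,a=J\}$, called a face of $A$ when non-empty; all points of a face $B$ have the same support $\mathrm{Supp}\,B$. Socle: $\widehat a=(a_1,\dots,a_{m-1})$, $\widehat A=\{\widehat a:a\in A\}$. A basic Presburger set $A\subseteq F_I(\Gamma^m)$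 is the set of $x\in F_I(\Gamma^m)$ satisfying finitely many conditions $\varphi_l(x)\geq\gamma_l$ and $\psi_l(x)\equiv\rho_l\,[n_l]$, with $\varphi_l,\psi_l:x\mapsto\sum_{i\in I}c_ix_i$, $c_i\in\mathbb{Z}$, $\gamma_l\in\mathcal{Z}$, $0\le\rho_l<n_l$ integers, and $a\equiv b\,[n]$ meaning $a-b\in n\mathcal{Z}$. *)

theory Defs
  imports "HOL-Analysis.Analysis"
begin

text \<open>The Z-group is modelled as a subset Z of an ambient ordered field 'k,
  whose unit 1 is the smallest positive element of Z.  The element +\<infinity> is None.\<close>

definition zcong :: "'k::linordered_field set \<Rightarrow> nat \<Rightarrow> ('k \<times> 'k) set" where
  "zcong Z n = {(a, b). a \<in> Z \<and> b \<in> Z \<and> (\<exists>z\<in>Z. a - b = of_nat n * z)}"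

definition zgroup :: "'k::linordered_field set \<Rightarrow> bool" where
  "zgroup Z \<longleftrightarrow> 0 \<in> Z \<and> (\<forall>x\<in>Z. \<forall>y\<in>Z. x - y \<in> Z) \<and> 1 \<in> Z
     \<and> \<not> (\<exists>z\<in>Z. 0 < z \<and> z < 1)
     \<and> (\<forall>n::nat. n \<ge> 1 \<longrightarrow> card (Z // zcong Z n) = n)"

definition Qhull :: "'k::linordered_field set \<Rightarrow> 'k set" where
  "Qhull Z = {x. \<exists>n::nat. n \<ge> 1 \<and> of_nat n * x \<in> Z}"

definition Gamma :: "'k::linordered_field set \<Rightarrow> 'k option set" where
  "Gamma Z = Some ` Z \<union> {None}"

definition Omega :: "'k::linordered_field set \<Rightarrow> 'k option set" where
  "Omega Z = Some ` Qhull Z \<union> {None}"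

definition omega_top :: "'k::linordered_field set \<Rightarrow> 'k option topology" where
  "omega_top Z = topology_generated_by
     ({Some ` {x \<in> Qhull Z. a < x \<and> x < b} | a b. a \<in> Qhull Z \<and> b \<in> Qhull Z}
      \<union> {insert None (Some ` {x \<in> Qhull Z. a < x}) | a. a \<in> Qhull Z})"

definition omega_pow_top :: "'k::linordered_field set \<Rightarrow> nat \<Rightarrow> (nat \<Rightarrow> 'k option) topology" where
  "omega_pow_top Z m = product_topology (\<lambda>_. omega_top Z) {1..m}"

definition clos :: "'k::linordered_field set \<Rightarrow> nat \<Rightarrow> (nat \<Rightarrow> 'k option) set \<Rightarrow> (nat \<Rightarrow> 'k option) set" where
  "clos Z m A = omega_pow_top Z m closure_of A"

definition Gamma_pow :: "'k::linordered_field set \<Rightarrow> nat \<Rightarrow> (nat \<Rightarrow> 'k option) set" where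
  "Gamma_pow Z m = PiE {1..m} (\<lambda>_. Gamma Z)"

definition supp :: "nat \<Rightarrow> (nat \<Rightarrow> 'k option) \<Rightarrow> nat set" where
  "supp m a = {i \<in> {1..m}. a i \<noteq> None}"

definition F_Gamma :: "'k::linordered_field set \<Rightarrow> nat \<Rightarrow> nat set \<Rightarrow> (nat \<Rightarrow> 'k option) set" where
  "F_Gamma Z m I = {a \<in> Gamma_pow Z m. supp m a = I}"

definition F_face :: "'k::linordered_field set \<Rightarrow> nat \<Rightarrow> nat set \<Rightarrow> (nat \<Rightarrow> 'k option) set \<Rightarrow> (nat \<Rightarrow> 'k option) set" where
  "F_face Z m J A = {a \<in> clos Z m A. supp m a = J}"

definition is_face :: "'k::linordered_field set \<Rightarrow> nat \<Rightarrow> (nat \<Rightarrow> 'k option) set \<Rightarrow> (nat \<Rightarrow> 'k option) set \<Rightarrow> bool" where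
  "is_face Z m A B \<longleftrightarrow> (\<exists>J. B = F_face Z m J A) \<and> B \<noteq> {}"

definition socle :: "nat \<Rightarrow> (nat \<Rightarrow> 'k option) \<Rightarrow> (nat \<Rightarrow> 'k option)" where
  "socle m a = restrict a {1..m - 1}"

definition nonneg :: "nat \<Rightarrow> (nat \<Rightarrow> 'k::linordered_field option) set \<Rightarrow> bool" where
  "nonneg m A \<longleftrightarrow> (\<forall>a\<in>A. \<forall>i\<in>{1..m}. \<forall>v. a i = Some v \<longrightarrow> 0 \<le> v)"

definition linform :: "nat set \<Rightarrow> (nat \<Rightarrow> int) \<Rightarrow> (nat \<Rightarrow> 'k::linordered_field option) \<Rightarrow> 'k" where
  "linform I c x = (\<Sum>i\<in>I. of_int (c i) * the (x i))"

definition modZ :: "'k::linordered_field set \<Rightarrow> nat \<Rightarrow> 'k \<Rightarrow> 'k \<Rightarrow> bool" where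
  "modZ Z n a b \<longleftrightarrow> (\<exists>z\<in>Z. a - b = of_nat n * z)"

definition basic_presburger :: "'k::linordered_field set \<Rightarrow> nat \<Rightarrow> nat set \<Rightarrow> (nat \<Rightarrow> 'k option) set \<Rightarrow> bool" where
  "basic_presburger Z m I A \<longleftrightarrow>
    (\<exists>(ineqs :: ((nat \<Rightarrow> int) \<times> 'k) list) (congs :: ((nat \<Rightarrow> int) \<times> int \<times> nat) list).
       (\<forall>(c, g) \<in> set ineqs. g \<in> Z) \<and>
       (\<forall>(c, r, n) \<in> set congs. 0 \<le> r \<and> r < int n) \<and>
       A = {x \<in> F_Gamma Z m I.
              (\<forall>(c, g) \<in> set ineqs. linform I c x \<ge> g) \<and>
              (\<forall>(c, r, n) \<in> set congs. modZ Z n (linform I c x) (of_int r))})"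

end

theory Submission imports Defs begin

section \<open>Z-group arithmetic\<close>

lemma zg_0: "zgroup Z \<Longrightarrow> 0 \<in> Z" by (simp add: zgroup_def)
lemma zg_1: "zgroup Z \<Longrightarrow> 1 \<in> Z" by (simp add: zgroup_def)
lemma zg_diff: "zgroup Z \<Longrightarrow> x \<in> Z \<Longrightarrow> y \<in> Z \<Longrightarrow> x - y \<in> Z" by (simp add: zgroup_def)
lemma zg_uminus: "zgroup Z \<Longrightarrow> x \<in> Z \<Longrightarrow> - x \<in> Z"
  using zg_diff[of Z 0 x] zg_0[of Z] by simp
lemma zg_add: "zgroup Z \<Longrightarrow> x \<in> Z \<Longrightarrow> y \<in> Z \<Longrightarrow> x + y \<in> Z"
  using zg_diff[of Z x "- y"] zg_uminus[of Z y] by simp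
lemma zg_nat_mult: "zgroup Z \<Longrightarrow> x \<in> Z \<Longrightarrow> of_nat n * x \<in> Z"
  by (induction n) (auto simp: algebra_simps zg_0 zg_add)
lemma zg_int_mult: assumes "zgroup Z" "x \<in> Z" shows "of_int k * x \<in> Z"
proof (cases k rule: int_cases)
  case (nonneg n) then show ?thesis using zg_nat_mult[OF assms, of n] by simp
next
  case (neg n)
  then have "of_int k = - (of_nat (Suc n) :: 'a)" by simp
  then have "of_int k * x = - (of_nat (Suc n) * x)" by (simp only: minus_mult_left)
  then show ?thesis using zg_uminus[OF assms(1) zg_nat_mult[OF assms, of "Suc n"]] by simp
qed
lemma zg_of_int: "zgroup Z \<Longrightarrow> of_int k \<in> Z"
  using zg_int_mult[of Z 1 k] zg_1[of Z] by simp
lemma zg_abs: "zgroup Z \<Longrightarrow> x \<in> Z \<Longrightarrow> \<bar>x\<bar> \<in> Z"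
  by (cases "x \<ge> 0") (auto simp: zg_uminus)
lemma zg_max: "x \<in> Z \<Longrightarrow> y \<in> Z \<Longrightarrow> max x y \<in> Z"
  by (simp add: max_def)
lemma zg_sum: "zgroup Z \<Longrightarrow> (\<And>i. i \<in> F \<Longrightarrow> f i \<in> Z) \<Longrightarrow> sum f F \<in> Z"
  by (induction F rule: infinite_finite_induct) (auto simp: zg_0 zg_add)
lemma zg_small: assumes "zgroup Z" "x \<in> Z" "\<bar>x\<bar> < 1" shows "x = 0"
proof -
  have nb: "\<not> (\<exists>z\<in>Z. 0 < z \<and> z < 1)" using assms(1) by (simp add: zgroup_def)
  show ?thesis
  proof (cases "x \<ge> 0")
    case True then show ?thesis using nb assms by force
  next
    case False then show ?thesis using nb assms zg_uminus[OF assms(1,2)] by force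
  qed
qed

lemma Z_sub_Qhull: "Z \<subseteq> Qhull Z"
  unfolding Qhull_def by (auto intro: exI[of _ 1])

lemma Qhull_bound: assumes "zgroup Z" "b \<in> Qhull Z" shows "\<exists>M\<in>Z. b \<le> M"
proof -
  obtain n :: nat where n: "n \<ge> 1" "of_nat n * b \<in> Z" using assms(2) by (auto simp: Qhull_def)
  have "b \<le> \<bar>b\<bar>" by simp
  also have "\<bar>b\<bar> \<le> of_nat n * \<bar>b\<bar>" using n(1)
    using mult_right_mono[of 1 "of_nat n" "\<bar>b\<bar>"] by simp
  also have "\<dots> = \<bar>of_nat n * b\<bar>" by (simp add: abs_mult)
  finally show ?thesis using zg_abs[OF assms(1) n(2)] by blast
qed


lemma finite_Z_bound:
  assumes "zgroup Z" "finite F"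
    and "\<And>i. i \<in> F \<Longrightarrow> \<exists>M\<in>Z. P i M"
    and "\<And>i M M'. P i M \<Longrightarrow> M \<le> M' \<Longrightarrow> P i M'"
  shows "\<exists>M\<in>Z. \<forall>i\<in>F. P i M"
  using assms(2,3)
proof (induction F rule: finite_induct)
  case empty then show ?case using zg_0[OF assms(1)] by auto
next
  case (insert j F)
  then obtain M1 where M1: "M1 \<in> Z" "\<forall>i\<in>F. P i M1" by auto
  obtain M2 where M2: "M2 \<in> Z" "P j M2" using insert by auto
  show ?case using M1 M2 assms(4)
    by (intro bexI[of _ "max M1 M2"]) (auto simp: zg_max)
qed

lemma Qhull_add: assumes "zgroup Z" "q \<in> Qhull Z" "r \<in> Qhull Z" shows "q + r \<in> Qhull Z" "q - r \<in> Qhull Z"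
proof -
  obtain n :: nat where n: "n \<ge> 1" "of_nat n * q \<in> Z" using assms(2) by (auto simp: Qhull_def)
  obtain k :: nat where k: "k \<ge> 1" "of_nat k * r \<in> Z" using assms(3) by (auto simp: Qhull_def)
  have "of_nat (n*k) * (q + r) = of_nat k * (of_nat n * q) + of_nat n * (of_nat k * r)"
    by (simp add: algebra_simps)
  moreover have "of_nat (n*k) * (q - r) = of_nat k * (of_nat n * q) - of_nat n * (of_nat k * r)"
    by (simp add: algebra_simps)
  moreover have "n * k \<ge> 1" using n k by simp
  ultimately show "q + r \<in> Qhull Z" "q - r \<in> Qhull Z"
    unfolding Qhull_def using zg_add[OF assms(1)] zg_diff[OF assms(1)] zg_nat_mult[OF assms(1)] n k
    by (metis (mono_tags, lifting) mem_Collect_eq)+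
qed

lemma Qhull_inv: "n \<ge> 1 \<Longrightarrow> zgroup Z \<Longrightarrow> 1 / of_nat n \<in> Qhull Z"
  unfolding Qhull_def using zg_1[of Z] by (intro CollectI exI[of _ n]) simp

definition OmGen :: "'k::linordered_field set \<Rightarrow> 'k option set set" where
  "OmGen Z = ({Some ` {x \<in> Qhull Z. a < x \<and> x < b} | a b. a \<in> Qhull Z \<and> b \<in> Qhull Z}
      \<union> {insert None (Some ` {x \<in> Qhull Z. a < x}) | a. a \<in> Qhull Z})"

lemma omega_top_eq: "omega_top Z = topology_generated_by (OmGen Z)"
  by (simp add: omega_top_def OmGen_def)

lemma topspace_omega: assumes "zgroup Z" shows "topspace (omega_top Z) = Omega Z"
proof
  show "topspace (omega_top Z) \<subseteq> Omega Z"
    unfolding omega_top_eq topology_generated_by_topspace OmGen_def Omega_def by auto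
  show "Omega Z \<subseteq> topspace (omega_top Z)"
  proof
    fix y assume y: "y \<in> Omega Z"
    show "y \<in> topspace (omega_top Z)"
    proof (cases y)
      case None
      have "insert None (Some ` {x \<in> Qhull Z. 0 < x}) \<in> OmGen Z"
        unfolding OmGen_def using Z_sub_Qhull zg_0[OF assms] by blast
      then show ?thesis unfolding omega_top_eq topology_generated_by_topspace using None by blast
    next
      case (Some q)
      then have q: "q \<in> Qhull Z" using y by (auto simp: Omega_def)
      have 1: "(1::'a) \<in> Qhull Z" using Z_sub_Qhull zg_1[OF assms] by blast
      have "Some ` {x \<in> Qhull Z. q - 1 < x \<and> x < q + 1} \<in> OmGen Z"
        unfolding OmGen_def using Qhull_add[OF assms q 1] by blast
      moreover have "y \<in> Some ` {x \<in> Qhull Z. q - 1 < x \<and> x < q + 1}" using Some q by auto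
      ultimately show ?thesis unfolding omega_top_eq topology_generated_by_topspace by blast
    qed
  qed
qed

lemma none_nbhd:
  assumes "generate_topology_on (OmGen Z) U" "None \<in> U"
  shows "\<exists>b\<in>Qhull Z. \<forall>x\<in>Qhull Z. b < x \<longrightarrow> Some x \<in> U"
  using assms
proof (induction rule: generate_topology_on.induct)
  case Empty then show ?case by simp
next
  case (Int a b)
  then obtain b1 b2 where "b1 \<in> Qhull Z" "b2 \<in> Qhull Z" "\<forall>x\<in>Qhull Z. b1 < x \<longrightarrow> Some x \<in> a"
    "\<forall>x\<in>Qhull Z. b2 < x \<longrightarrow> Some x \<in> b" by auto
  then show ?case by (intro bexI[of _ "max b1 b2"]) (auto simp: max_def)
next
  case (UN K) then show ?case by blast
next
  case (Basis s) then show ?case unfolding OmGen_def by auto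
qed

lemma some_nbhd_unique:
  assumes "zgroup Z" "n \<ge> 1" "of_nat n * q \<in> Z" "w \<in> Z" "q - 1 / of_nat n < w" "w < q + 1 / of_nat n"
  shows "w = q"
proof -
  have np: "(0::'a) < of_nat n" using assms(2) by simp
  have "\<bar>w - q\<bar> < 1 / of_nat n" using assms(5,6) by auto
  then have "of_nat n * \<bar>w - q\<bar> < 1" using np by (simp add: field_simps)
  then have "\<bar>of_nat n * w - of_nat n * q\<bar> < 1" by (simp add: abs_mult right_diff_distrib[symmetric])
  moreover have "of_nat n * w - of_nat n * q \<in> Z"
    using zg_diff[OF assms(1) zg_nat_mult[OF assms(1) assms(4)] assms(3)] .
  ultimately have "of_nat n * w - of_nat n * q = 0" using zg_small[OF assms(1)] by blast
  then show ?thesis using np by (simp add: right_diff_distrib[symmetric])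
qed

definition approx :: "'k::linordered_field set \<Rightarrow> nat \<Rightarrow> (nat \<Rightarrow> 'k option) set \<Rightarrow> (nat \<Rightarrow> 'k option) \<Rightarrow> bool" where
  "approx Z m S a \<longleftrightarrow> (\<forall>M\<in>Z. \<exists>x\<in>S. \<forall>i\<in>{1..m}.
      (a i = None \<longrightarrow> x i = None \<or> (\<exists>w. x i = Some w \<and> M < w)) \<and> (a i \<noteq> None \<longrightarrow> x i = a i))"

lemma topspace_pow: "zgroup Z \<Longrightarrow> topspace (omega_pow_top Z m) = PiE {1..m} (\<lambda>_. Omega Z)"
  by (simp add: omega_pow_top_def topspace_omega)

lemma omega_coord: "a \<in> PiE I (\<lambda>_. Omega Z) \<Longrightarrow> i \<in> I \<Longrightarrow> a i = Some q \<Longrightarrow> q \<in> Qhull Z"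
proof -
  assume "a \<in> PiE I (\<lambda>_. Omega Z)" "i \<in> I" "a i = Some q"
  then have "Some q \<in> Omega Z" by (metis PiE_mem)
  then show "q \<in> Qhull Z" unfolding Omega_def by auto
qed

lemma clos_char:
  assumes Z: "zgroup Z" and S: "S \<subseteq> PiE {1..m} (\<lambda>_. Gamma Z)"
  shows "a \<in> clos Z m S \<longleftrightarrow> a \<in> PiE {1..m} (\<lambda>_. Omega Z) \<and> approx Z m S a"
proof
  assume a: "a \<in> clos Z m S"
  then have aT: "a \<in> PiE {1..m} (\<lambda>_. Omega Z)"
  proof -
    have "a \<in> topspace (omega_pow_top Z m)" using a unfolding clos_def by (simp add: in_closure_of)
    then show ?thesis using topspace_pow[OF Z] by simp
  qed
  have ap: "approx Z m S a" unfolding approx_def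
  proof
    fix M assume M: "M \<in> Z"
    define n where "n i = (SOME n::nat. n \<ge> 1 \<and> of_nat n * the (a i) \<in> Z)" for i
    define X where "X i = (if a i = None then insert None (Some ` {x\<in>Qhull Z. M < x})
       else Some ` {x\<in>Qhull Z. the (a i) - 1 / of_nat (n i) < x \<and> x < the (a i) + 1 / of_nat (n i)})" for i
    have nprop: "n i \<ge> 1 \<and> of_nat (n i) * the (a i) \<in> Z" if "i \<in> {1..m}" "a i \<noteq> None" for i
    proof -
      have "the (a i) \<in> Qhull Z" using omega_coord[OF aT that(1)] that(2) by auto
      then have "\<exists>n::nat. n \<ge> 1 \<and> of_nat n * the (a i) \<in> Z" by (simp add: Qhull_def)
      then show ?thesis unfolding n_def by (rule someI_ex)
    qed
    have "openin (omega_top Z) (X i)" if "i \<in> {1..m}" for i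
    proof (cases "a i = None")
      case True
      have "M \<in> Qhull Z" using M Z_sub_Qhull by blast
      then have "insert None (Some ` {x\<in>Qhull Z. M < x}) \<in> OmGen Z"
        unfolding OmGen_def by (intro UnI2 CollectI exI[of _ M]) simp
      then show ?thesis unfolding omega_top_eq X_def using True
        by (simp add: topology_generated_by_Basis)
    next
      case False
      have q: "the (a i) \<in> Qhull Z" using omega_coord[OF aT that] False by auto
      have inv: "1 / of_nat (n i) \<in> Qhull Z" using Qhull_inv nprop[OF that False] Z by blast
      have "Some ` {x\<in>Qhull Z. the (a i) - 1 / of_nat (n i) < x \<and> x < the (a i) + 1 / of_nat (n i)} \<in> OmGen Z"
        unfolding OmGen_def using Qhull_add[OF Z q inv]
        by (intro UnI1 CollectI exI[of _ "the (a i) - 1 / of_nat (n i)"] exI[of _ "the (a i) + 1 / of_nat (n i)"]) simp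
      then show ?thesis unfolding omega_top_eq X_def using False
        by (simp only: if_False topology_generated_by_Basis)
    qed
    then have op: "openin (omega_pow_top Z m) (PiE {1..m} X)"
      unfolding omega_pow_top_def by (simp add: openin_PiE)
    have aX: "a \<in> PiE {1..m} X"
    proof -
      have "a i \<in> X i" if "i \<in> {1..m}" for i
      proof (cases "a i")
        case None then show ?thesis by (simp add: X_def)
      next
        case (Some q)
        have q: "q \<in> Qhull Z" using omega_coord[OF aT that Some] .
        have "(0::'a) < 1 / of_nat (n i)" using nprop[OF that] Some by simp
        then show ?thesis using Some q by (auto simp: X_def)
      qed
      then show ?thesis using aT by (auto simp: PiE_iff)
    qed
    obtain y where y: "y \<in> S" "y \<in> PiE {1..m} X"
      using a op aX unfolding clos_def in_closure_of by blast
    have "\<forall>i\<in>{1..m}. (a i = None \<longrightarrow> y i = None \<or> (\<exists>w. y i = Some w \<and> M < w)) \<and> (a i \<noteq> None \<longrightarrow> y i = a i)"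
    proof
      fix i assume i: "i \<in> {1..m}"
      have yX: "y i \<in> X i" using y(2) i by (auto simp: PiE_iff)
      have yG: "y i \<in> Gamma Z" using y(1) S i by (auto simp: PiE_iff)
      show "(a i = None \<longrightarrow> y i = None \<or> (\<exists>w. y i = Some w \<and> M < w)) \<and> (a i \<noteq> None \<longrightarrow> y i = a i)"
      proof (cases "a i")
        case None then show ?thesis using yX by (auto simp: X_def)
      next
        case (Some q)
        then obtain w where w: "y i = Some w" "q - 1 / of_nat (n i) < w" "w < q + 1 / of_nat (n i)"
          using yX by (auto simp: X_def)
        have "w \<in> Z" using yG w(1) by (auto simp: Gamma_def)
        then have "w = q" using some_nbhd_unique[OF Z _ _ _ w(2,3)] nprop[OF i] Some by auto
        then show ?thesis using Some w by simp
      qed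
    qed
    then show "\<exists>x\<in>S. \<forall>i\<in>{1..m}. (a i = None \<longrightarrow> x i = None \<or> (\<exists>w. x i = Some w \<and> M < w)) \<and> (a i \<noteq> None \<longrightarrow> x i = a i)"
      using y(1) by blast
  qed
  show "a \<in> PiE {1..m} (\<lambda>_. Omega Z) \<and> approx Z m S a" using aT ap by blast
next
  assume "a \<in> PiE {1..m} (\<lambda>_. Omega Z) \<and> approx Z m S a"
  then have aT: "a \<in> PiE {1..m} (\<lambda>_. Omega Z)" and ap: "approx Z m S a" by auto
  show "a \<in> clos Z m S" unfolding clos_def in_closure_of
  proof (intro conjI allI impI)
    show "a \<in> topspace (omega_pow_top Z m)" using aT topspace_pow[OF Z] by simp
    fix T assume T: "a \<in> T \<and> openin (omega_pow_top Z m) T"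
    then obtain X where X: "a \<in> PiE {1..m} X" "\<And>i. openin (omega_top Z) (X i)" "PiE {1..m} X \<subseteq> T"
      unfolding omega_pow_top_def using product_topology_open_contains_basis[of "\<lambda>_. omega_top Z" "{1..m}" T a] T
      unfolding omega_pow_top_def by blast
    have "\<exists>M\<in>Z. \<forall>i\<in>{1..m}. a i = None \<longrightarrow> (\<forall>x\<in>Qhull Z. M < x \<longrightarrow> Some x \<in> X i)"
    proof (rule finite_Z_bound[OF Z])
      fix i assume i: "i \<in> {1..m}"
      show "\<exists>M\<in>Z. a i = None \<longrightarrow> (\<forall>x\<in>Qhull Z. M < x \<longrightarrow> Some x \<in> X i)"
      proof (cases "a i = None")
        case True
        have g: "generate_topology_on (OmGen Z) (X i)"
          using X(2)[of i] unfolding omega_top_eq by (rule openin_topology_generated_by)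
        have "None \<in> X i" using PiE_mem[OF X(1) i] True by simp
        then obtain b where b: "b \<in> Qhull Z" "\<forall>x\<in>Qhull Z. b < x \<longrightarrow> Some x \<in> X i"
          using none_nbhd[OF g] by blast
        obtain M where M: "M \<in> Z" "b \<le> M" using Qhull_bound[OF Z b(1)] by blast
        have "\<forall>x\<in>Qhull Z. M < x \<longrightarrow> Some x \<in> X i" using b(2) M(2) by (meson order_le_less_trans)
        then show ?thesis using M(1) by blast
      next
        case False then show ?thesis using zg_0[OF Z] by auto
      qed
    qed auto
    then obtain M where M: "M \<in> Z" "\<forall>i\<in>{1..m}. a i = None \<longrightarrow> (\<forall>x\<in>Qhull Z. M < x \<longrightarrow> Some x \<in> X i)"
      by blast
    obtain x where x: "x \<in> S" "\<forall>i\<in>{1..m}. (a i = None \<longrightarrow> x i = None \<or> (\<exists>w. x i = Some w \<and> M < w)) \<and> (a i \<noteq> None \<longrightarrow> x i = a i)"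
      using ap M(1) unfolding approx_def by blast
    have "x \<in> PiE {1..m} X"
    proof -
      have "x i \<in> X i" if i: "i \<in> {1..m}" for i
      proof (cases "a i = None")
        case True
        have "x i \<in> Gamma Z" using x(1) S i by (auto simp: PiE_iff)
        moreover have "None \<in> X i" using PiE_mem[OF X(1) i] True by simp
        moreover have "x i = None \<or> (\<exists>w. x i = Some w \<and> M < w)" using x(2) i True by blast
        moreover have "Some w \<in> X i" if "w \<in> Z" "M < w" for w
          using M(2) i True Z_sub_Qhull that by blast
        ultimately show ?thesis unfolding Gamma_def by (metis UnE imageE option.inject singletonD)
      next
        case False then show ?thesis using x(2) i X(1) by (auto simp: PiE_iff)
      qed
      moreover have "x \<in> extensional {1..m}" using x(1) S by (auto simp: PiE_iff)
      ultimately show ?thesis unfolding PiE_iff by blast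
    qed
    then show "\<exists>y. y \<in> S \<and> y \<in> T" using x(1) X(3) by blast
  qed
qed

section \<open>Farkas lemma via Fourier-Motzkin\<close>

definition lsum :: "'v set \<Rightarrow> ('v \<Rightarrow> int) \<Rightarrow> ('v \<Rightarrow> 'f::linordered_field) \<Rightarrow> 'f" where
  "lsum S c u = (\<Sum>i\<in>S. of_int (c i) * u i)"

definition sat :: "'v set \<Rightarrow> ('v \<Rightarrow> 'f::linordered_field) \<Rightarrow> ('v \<Rightarrow> int) \<times> int \<Rightarrow> bool" where
  "sat S u r \<longleftrightarrow> lsum S (fst r) u \<ge> of_int (snd r)"

inductive_set cone :: "(('v \<Rightarrow> int) \<times> int) set \<Rightarrow> (('v \<Rightarrow> int) \<times> int) set" for R where
  base: "r \<in> R \<Longrightarrow> r \<in> cone R"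
| add: "(c1, b1) \<in> cone R \<Longrightarrow> (c2, b2) \<in> cone R \<Longrightarrow> (\<lambda>i. c1 i + c2 i, b1 + b2) \<in> cone R"
| scale: "(c, b) \<in> cone R \<Longrightarrow> (\<lambda>i. int k * c i, int k * b) \<in> cone R"

lemma cone_trans: assumes "R' \<subseteq> cone R" "r \<in> cone R'" shows "r \<in> cone R"
  using assms(2) by induction (use assms(1) in \<open>auto intro: cone.intros\<close>)

lemma cone_coord0: assumes "\<forall>r\<in>R. fst r s = 0" "r \<in> cone R" shows "fst r s = 0"
  using assms(2) by induction (use assms(1) in auto)

lemma lsum_insert_upd:
  assumes "finite S" "s \<notin> S"
  shows "lsum (insert s S) c (u(s := t)) = of_int (c s) * t + lsum S c u"
proof -
  have "lsum S c (u(s := t)) = lsum S c u" unfolding lsum_def using assms(2)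
    by (intro sum.cong) auto
  then show ?thesis using assms unfolding lsum_def by simp
qed

lemma lsum_comb:
  "lsum S (\<lambda>i. a * c1 i + b * c2 i) u = of_int a * lsum S c1 u + of_int b * lsum S c2 u"
  unfolding lsum_def by (simp add: sum.distrib sum_distrib_left algebra_simps)

lemma frac_le_helper:
  fixes a b x y :: "'f::linordered_field"
  assumes "0 < x" "0 < y" "a * y \<le> b * x" shows "a / x \<le> b / y"
proof -
  have "(a * y - b * x) / (x * y) \<le> 0" using assms by (intro divide_nonpos_pos) auto
  then show ?thesis using assms frac_le_eq[of x y a b] by simp
qed

lemma farkas:
  fixes R :: "(('v \<Rightarrow> int) \<times> int) set"
  assumes "finite S" "finite R" "\<not> (\<exists>u::'v \<Rightarrow> 'f::linordered_field. \<forall>r\<in>R. sat S u r)"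
  shows "\<exists>c b. (c, b) \<in> cone R \<and> (\<forall>i\<in>S. c i = 0) \<and> b > 0"
  using assms
proof (induction S arbitrary: R rule: finite_induct)
  case empty
  then obtain r where r: "r \<in> R" "\<not> sat {} (\<lambda>_. 0::'f) r" by blast
  then have "snd r > 0" unfolding sat_def lsum_def by simp
  then show ?case using r(1) cone.base[of r R] by (intro exI[of _ "fst r"] exI[of _ "snd r"]) simp
next
  case (insert s S)
  define P where "P = {r\<in>R. fst r s > 0}"
  define N where "N = {r\<in>R. fst r s < 0}"
  define comb where "comb p n = (\<lambda>i. (- fst n s) * fst p i + fst p s * fst n i,
       (- fst n s) * snd p + fst p s * snd n)" for p n :: "('v \<Rightarrow> int) \<times> int"
  define R' where "R' = {r\<in>R. fst r s = 0} \<union> (\<lambda>(p, n). comb p n) ` (P \<times> N)"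
  have finR': "finite R'" unfolding R'_def P_def N_def using insert.prems(1) by auto
  have R'cone: "R' \<subseteq> cone R"
  proof
    fix r assume "r \<in> R'"
    then consider "r \<in> R" | p n where "p \<in> P" "n \<in> N" "r = comb p n" unfolding R'_def by auto
    then show "r \<in> cone R"
    proof cases
      case 1 then show ?thesis by (rule cone.base)
    next
      case 2
      obtain cp bp where p: "p = (cp, bp)" by fastforce
      obtain cn bn where n: "n = (cn, bn)" by fastforce
      have pc: "(cp, bp) \<in> cone R" "(cn, bn) \<in> cone R" using 2 p n P_def N_def cone.base by auto
      have "(\<lambda>i. int (nat (- cn s)) * cp i, int (nat (- cn s)) * bp) \<in> cone R"
        by (rule cone.scale[OF pc(1)])
      moreover have "(\<lambda>i. int (nat (cp s)) * cn i, int (nat (cp s)) * bn) \<in> cone R"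
        by (rule cone.scale[OF pc(2)])
      ultimately have "(\<lambda>i. int (nat (- cn s)) * cp i + int (nat (cp s)) * cn i,
          int (nat (- cn s)) * bp + int (nat (cp s)) * bn) \<in> cone R"
        by (rule cone.add)
      moreover have "- cn s \<ge> 0" "cp s \<ge> 0" using 2 p n P_def N_def by auto
      ultimately show ?thesis using 2 p n by (simp add: comb_def)
    qed
  qed
  have R's: "\<forall>r\<in>R'. fst r s = 0" unfolding R'_def comb_def by auto
  have "\<not> (\<exists>u::'v \<Rightarrow> 'f. \<forall>r\<in>R'. sat S u r)"
  proof
    assume "\<exists>u::'v \<Rightarrow> 'f. \<forall>r\<in>R'. sat S u r"
    then obtain u :: "'v \<Rightarrow> 'f" where u: "\<forall>r\<in>R'. sat S u r" by blast
    define L where "L p = (of_int (snd p) - lsum S (fst p) u) / of_int (fst p s)" for p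
    define U where "U n = (lsum S (fst n) u - of_int (snd n)) / of_int (- fst n s)" for n
    have LU: "L p \<le> U n" if "p \<in> P" "n \<in> N" for p n
    proof -
      have ps: "(0::'f) < of_int (fst p s)" using that P_def by simp
      have ns: "(0::'f) < of_int (- fst n s)" using that N_def by simp
      have "comb p n \<in> R'" unfolding R'_def using that by blast
      then have "sat S u (comb p n)" using u by blast
      moreover have "lsum S (fst (comb p n)) u = of_int (- fst n s) * lsum S (fst p) u + of_int (fst p s) * lsum S (fst n) u"
        unfolding comb_def fst_conv by (rule lsum_comb)
      moreover have "snd (comb p n) = (- fst n s) * snd p + fst p s * snd n" unfolding comb_def by simp
      ultimately have "of_int (- fst n s) * of_int (snd p) + of_int (fst p s) * of_int (snd n)
          \<le> of_int (- fst n s) * lsum S (fst p) u + of_int (fst p s) * lsum S (fst n) u"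
        unfolding sat_def by (metis of_int_add of_int_mult)
      then have "(of_int (snd p) - lsum S (fst p) u) * of_int (- fst n s) \<le>
                 (lsum S (fst n) u - of_int (snd n)) * of_int (fst p s)"
        by (simp add: algebra_simps)
      then show ?thesis unfolding L_def U_def by (rule frac_le_helper[OF ps ns])
    qed
    define t where "t = (if P \<noteq> {} then Max (L ` P) else if N \<noteq> {} then Min (U ` N) else 0)"
    have finP: "finite P" "finite N" using insert.prems(1) P_def N_def by auto
    have tL: "L p \<le> t" if "p \<in> P" for p
      using that finP by (auto simp: t_def)
    have tU: "t \<le> U n" if "n \<in> N" for n
    proof (cases "P = {}")
      case False
      then have "Max (L ` P) \<in> L ` P" using finP by simp
      then obtain p where "p \<in> P" "t = L p" using False by (auto simp: t_def)
      then show ?thesis using LU that by simp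
    next
      case True then show ?thesis using that finP by (auto simp: t_def)
    qed
    have "\<forall>r\<in>R. sat (insert s S) (u(s := t)) r"
    proof
      fix r assume r: "r \<in> R"
      have eq: "lsum (insert s S) (fst r) (u(s := t)) = of_int (fst r s) * t + lsum S (fst r) u"
        by (rule lsum_insert_upd[OF insert.hyps])
      consider "fst r s = 0" | "fst r s > 0" | "fst r s < 0" by linarith
      then show "sat (insert s S) (u(s := t)) r"
      proof cases
        case 1
        then have "r \<in> R'" unfolding R'_def using r by blast
        then show ?thesis using u eq 1 unfolding sat_def by simp
      next
        case 2
        then have "r \<in> P" using r P_def by simp
        then have "L r \<le> t" by (rule tL)
        moreover have "(0::'f) < of_int (fst r s)" using 2 by simp
        ultimately have "(of_int (snd r) - lsum S (fst r) u) \<le> t * of_int (fst r s)"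
          unfolding L_def using pos_divide_le_eq by blast
        then show ?thesis unfolding sat_def eq by (simp add: algebra_simps)
      next
        case 3
        then have "r \<in> N" using r N_def by simp
        then have "t \<le> U r" by (rule tU)
        moreover have "(0::'f) < of_int (- fst r s)" using 3 by simp
        ultimately have "t * of_int (- fst r s) \<le> lsum S (fst r) u - of_int (snd r)"
          unfolding U_def using pos_le_divide_eq by blast
        then show ?thesis unfolding sat_def eq by (simp add: algebra_simps)
      qed
    qed
    then show False using insert.prems(2) by blast
  qed
  then obtain c b where cb: "(c, b) \<in> cone R'" "\<forall>i\<in>S. c i = 0" "b > 0"
    using insert.IH[OF finR'] by blast
  have "c s = 0" using cone_coord0[OF R's cb(1)] by simp
  then show ?case using cb cone_trans[OF R'cone cb(1)] by auto
qed

section \<open>Key lemma: unbounded solutions give an integral direction\<close>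

definition ev :: "nat \<Rightarrow> nat \<Rightarrow> int" where "ev i = (\<lambda>j. if j = i then 1 else 0)"

lemma lsum_ev: assumes "finite S" "i \<in> S" shows "lsum S (ev i) u = u i"
proof -
  have "lsum S (ev i) u = (\<Sum>j\<in>S. if j = i then u j else 0)"
    unfolding lsum_def ev_def by (rule sum.cong) auto
  also have "\<dots> = u i" using assms by (simp add: sum.delta')
  finally show ?thesis .
qed

lemma rat_to_int:
  fixes v :: "nat \<Rightarrow> rat"
  assumes "finite S"
  shows "\<exists>D::int. D \<ge> 1 \<and> (\<exists>w::nat \<Rightarrow> int. \<forall>i\<in>S. of_int (w i) = of_int D * v i)"
proof -
  define a where "a i = fst (quotient_of (v i))" for i
  define d where "d i = snd (quotient_of (v i))" for i
  have vi: "v i = of_int (a i) / of_int (d i)" for i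
    unfolding a_def d_def by (simp add: quotient_of_div prod.case_eq_if)
  have dpos: "d i > 0" for i
    unfolding d_def using quotient_of_denom_pos' by simp
  define D where "D = (\<Prod>i\<in>S. d i)"
  define w where "w i = a i * (\<Prod>j\<in>S - {i}. d j)" for i
  have "D \<ge> 1" unfolding D_def using dpos
    by (metis int_one_le_iff_zero_less prod_pos)
  moreover have "of_int (w i) = of_int D * v i" if "i \<in> S" for i
  proof -
    have "D = d i * (\<Prod>j\<in>S - {i}. d j)" unfolding D_def using assms that by (simp add: prod.remove)
    then show ?thesis unfolding w_def vi using dpos[of i] by (simp add: field_simps)
  qed
  ultimately show ?thesis by blast
qed

lemma key_lemma:
  fixes Z :: "'k::linordered_field set" and G :: "((nat \<Rightarrow> int) \<times> 'k) set"
  assumes Z: "zgroup Z" and fin: "finite W" "finite T" "W \<inter> T = {}" "finite G"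
    and GZ: "\<forall>(c, g)\<in>G. g \<in> Z"
    and hyp: "\<forall>M\<in>Z. \<exists>u::nat \<Rightarrow> 'k. (\<forall>i\<in>W. M < u i) \<and> (\<forall>i\<in>T. 0 \<le> u i)
                 \<and> (\<forall>(c, g)\<in>G. g \<le> lsum (W \<union> T) c u)"
  shows "\<exists>v::nat \<Rightarrow> int. (\<forall>i\<in>W. 1 \<le> v i) \<and> (\<forall>i\<in>T. 0 \<le> v i)
            \<and> (\<forall>(c, g)\<in>G. 0 \<le> (\<Sum>i\<in>W \<union> T. c i * v i))"
proof -
  define S where "S = W \<union> T"
  have finS: "finite S" using fin S_def by simp
  define H where "H = (\<lambda>i. (ev i, 1::int)) ` W \<union> (\<lambda>i. (ev i, 0::int)) ` T \<union> (\<lambda>(c, g). (c, 0::int)) ` G"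
  have finH: "finite H" using fin unfolding H_def by simp
  define Ok where "Ok b c K \<longleftrightarrow> (\<forall>M (u::nat \<Rightarrow> 'k). 0 \<le> M \<longrightarrow> (\<forall>i\<in>W. M \<le> u i) \<longrightarrow> (\<forall>i\<in>T. 0 \<le> u i)
      \<longrightarrow> (\<forall>(c, g)\<in>G. g \<le> lsum S c u) \<longrightarrow> of_int b * M + K \<le> lsum S c u)" for b c K
  have inv: "\<exists>K\<in>Z. Ok (snd r) (fst r) K" if "r \<in> cone H" for r
    using that
  proof (induction rule: cone.induct)
    case (base r)
    then consider i where "i \<in> W" "r = (ev i, 1)" | i where "i \<in> T" "r = (ev i, 0)"
      | c g where "(c, g) \<in> G" "r = (c, 0)" unfolding H_def by auto
    then show ?case
    proof cases
      case 1
      then have "lsum S (ev i) u = u i" for u :: "nat \<Rightarrow> 'k" using lsum_ev[OF finS, of i u] S_def by simp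
      then have "Ok 1 (ev i) 0" unfolding Ok_def using 1 by auto
      then show ?thesis using 1 zg_0[OF Z] by auto
    next
      case 2
      then have "lsum S (ev i) u = u i" for u :: "nat \<Rightarrow> 'k" using lsum_ev[OF finS, of i u] S_def by simp
      then have "Ok 0 (ev i) 0" unfolding Ok_def using 2 by auto
      then show ?thesis using 2 zg_0[OF Z] by auto
    next
      case 3
      have "Ok 0 c g" unfolding Ok_def using 3 by auto
      then show ?thesis using 3 GZ by auto
    qed
  next
    case (add c1 b1 c2 b2)
    then obtain K1 K2 where K: "K1 \<in> Z" "K2 \<in> Z" "Ok b1 c1 K1" "Ok b2 c2 K2"
      by auto
    have eq: "lsum S (\<lambda>i. c1 i + c2 i) u = lsum S c1 u + lsum S c2 u" for u :: "nat \<Rightarrow> 'k"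
      unfolding lsum_def by (simp add: sum.distrib algebra_simps)
    have "Ok (b1 + b2) (\<lambda>i. c1 i + c2 i) (K1 + K2)"
      unfolding Ok_def
    proof (intro allI impI)
      fix M and u :: "nat \<Rightarrow> 'k"
      assume h: "0 \<le> M" "\<forall>i\<in>W. M \<le> u i" "\<forall>i\<in>T. 0 \<le> u i" "\<forall>(c, g)\<in>G. g \<le> lsum S c u"
      have "of_int b1 * M + K1 \<le> lsum S c1 u" using K(3) h unfolding Ok_def by blast
      moreover have "of_int b2 * M + K2 \<le> lsum S c2 u" using K(4) h unfolding Ok_def by blast
      ultimately show "of_int (b1 + b2) * M + (K1 + K2) \<le> lsum S (\<lambda>i. c1 i + c2 i) u"
        unfolding eq by (simp add: algebra_simps)
    qed
    then show ?case using zg_add[OF Z K(1,2)] by auto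
  next
    case (scale c b k)
    then obtain K where K: "K \<in> Z" "Ok b c K" by auto
    have eq: "lsum S (\<lambda>i. int k * c i) u = of_nat k * lsum S c u" for u :: "nat \<Rightarrow> 'k"
      unfolding lsum_def by (simp add: sum_distrib_left algebra_simps)
    have "Ok (int k * b) (\<lambda>i. int k * c i) (of_nat k * K)"
      unfolding Ok_def
    proof (intro allI impI)
      fix M and u :: "nat \<Rightarrow> 'k"
      assume h: "0 \<le> M" "\<forall>i\<in>W. M \<le> u i" "\<forall>i\<in>T. 0 \<le> u i" "\<forall>(c, g)\<in>G. g \<le> lsum S c u"
      then have "of_int b * M + K \<le> lsum S c u" using K(2) unfolding Ok_def by blast
      then have "of_nat k * (of_int b * M + K) \<le> of_nat k * lsum S c u"
        by (intro mult_left_mono) auto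
      then show "of_int (int k * b) * M + of_nat k * K \<le> lsum S (\<lambda>i. int k * c i) u"
        unfolding eq by (simp add: algebra_simps)
    qed
    then show ?case using zg_nat_mult[OF Z K(1)] by auto
  qed
  have "\<exists>u::nat \<Rightarrow> rat. \<forall>r\<in>H. sat S u r"
  proof (rule ccontr)
    assume "\<not> (\<exists>u::nat \<Rightarrow> rat. \<forall>r\<in>H. sat S u r)"
    from farkas[OF finS finH this] obtain c b where cb: "(c, b) \<in> cone H" "\<forall>i\<in>S. c i = 0" "b > 0"
      by blast
    obtain K where K: "K \<in> Z" "Ok b c K"
      using inv[OF cb(1)] by auto
    define M where "M = \<bar>K\<bar> + 1"
    have MZ: "M \<in> Z" unfolding M_def using zg_add[OF Z zg_abs[OF Z K(1)] zg_1[OF Z]] .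
    obtain u :: "nat \<Rightarrow> 'k" where u: "\<forall>i\<in>W. M < u i" "\<forall>i\<in>T. 0 \<le> u i" "\<forall>(c, g)\<in>G. g \<le> lsum S c u"
      using hyp MZ S_def by blast
    have "lsum S c u = 0" unfolding lsum_def using cb(2) by simp
    moreover have "0 \<le> M" unfolding M_def by simp
    moreover have "\<forall>i\<in>W. M \<le> u i" using u(1) by (simp add: less_imp_le)
    ultimately have le: "of_int b * M + K \<le> 0" using K(2) u(2,3) unfolding Ok_def by metis
    have "(1::'k) \<le> of_int b" using cb(3) by simp
    then have "1 * M \<le> of_int b * M" using \<open>0 \<le> M\<close> by (intro mult_right_mono) auto
    then have "M \<le> of_int b * M" by simp
    then show False using le unfolding M_def by linarith
  qed
  then obtain u :: "nat \<Rightarrow> rat" where u: "\<forall>r\<in>H. sat S u r" by blast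
  obtain D w where Dw: "D \<ge> 1" "\<forall>i\<in>S. of_int (w i) = of_int D * u i" using rat_to_int[OF finS] by blast
  have uW: "u i \<ge> 1" if "i \<in> W" for i
  proof -
    have "sat S u (ev i, 1)" using u that unfolding H_def by blast
    moreover have "i \<in> S" using that S_def by simp
    ultimately show ?thesis unfolding sat_def using lsum_ev[OF finS, of i u] by simp
  qed
  have uT: "u i \<ge> 0" if "i \<in> T" for i
  proof -
    have "sat S u (ev i, 0)" using u that unfolding H_def by blast
    moreover have "i \<in> S" using that S_def by simp
    ultimately show ?thesis unfolding sat_def using lsum_ev[OF finS, of i u] by simp
  qed
  have uG: "lsum S c u \<ge> 0" if "(c, g) \<in> G" for c g
  proof -
    have "sat S u (c, 0)" using u that unfolding H_def by force
    then show ?thesis unfolding sat_def by simp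
  qed
  have Dpos: "(1::rat) \<le> of_int D" using Dw(1) by simp
  have "\<forall>i\<in>W. 1 \<le> w i"
  proof
    fix i assume i: "i \<in> W"
    have "(1::rat) * 1 \<le> of_int D * u i" using uW[OF i] Dpos
      by (intro mult_mono) auto
    then have "(1::rat) \<le> of_int (w i)" using Dw(2) i S_def by simp
    then show "1 \<le> w i" by linarith
  qed
  moreover have "\<forall>i\<in>T. 0 \<le> w i"
  proof
    fix i assume i: "i \<in> T"
    have "(0::rat) \<le> of_int D * u i" using uT[OF i] Dpos by simp
    then have "(0::rat) \<le> of_int (w i)" using Dw(2) i S_def by simp
    then show "0 \<le> w i" by linarith
  qed
  moreover have "\<forall>(c, g)\<in>G. 0 \<le> (\<Sum>i\<in>W \<union> T. c i * w i)"
  proof (clarify)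
    fix c g assume cg: "(c, g) \<in> G"
    have "(of_int (\<Sum>i\<in>S. c i * w i) :: rat) = (\<Sum>i\<in>S. of_int (c i) * (of_int D * u i))"
      using Dw(2) by (simp add: of_int_sum)
    also have "\<dots> = of_int D * lsum S c u" unfolding lsum_def by (simp add: sum_distrib_left algebra_simps)
    also have "\<dots> \<ge> 0" using uG[OF cg] Dpos by simp
    finally have "(0::rat) \<le> of_int (\<Sum>i\<in>S. c i * w i)" .
    then show "0 \<le> (\<Sum>i\<in>W \<union> T. c i * w i)" unfolding S_def by linarith
  qed
  ultimately show ?thesis by blast
qed

section \<open>Basic Presburger sets\<close>

definition dir :: "((nat \<Rightarrow> int) \<times> 'k) list \<Rightarrow> nat set \<Rightarrow> bool" where
  "dir ineqs U \<longleftrightarrow> (\<exists>v::nat \<Rightarrow> int. (\<forall>i\<in>U. 1 \<le> v i) \<and> (\<forall>(c, g)\<in>set ineqs. 0 \<le> (\<Sum>i\<in>U. c i * v i)))"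

lemma supp_mem: "i \<in> {1..k} \<Longrightarrow> i \<in> supp k a \<longleftrightarrow> a i \<noteq> None"
  unfolding supp_def by simp

lemma approx_get:
  assumes "approx Z m S a" "M \<in> Z"
  shows "\<exists>x. x \<in> S \<and> (\<forall>i. i \<in> {1..m} \<longrightarrow> a i = None \<longrightarrow> x i = None \<or> (\<exists>w. x i = Some w \<and> M < w))
    \<and> (\<forall>i. i \<in> {1..m} \<longrightarrow> a i \<noteq> None \<longrightarrow> x i = a i)"
  using assms unfolding approx_def by blast

locale presb =
  fixes Z :: "'k::linordered_field set" and m :: nat and I :: "nat set"
    and ineqs :: "((nat \<Rightarrow> int) \<times> 'k) list" and congs :: "((nat \<Rightarrow> int) \<times> int \<times> nat) list"
    and A :: "(nat \<Rightarrow> 'k option) set"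
  assumes Z: "zgroup Z" and Isub: "I \<subseteq> {1..m}" and m1: "m \<ge> 1"
    and ineqZ: "\<forall>(c, g) \<in> set ineqs. g \<in> Z"
    and congok: "\<forall>(c, r, n) \<in> set congs. 0 \<le> r \<and> r < int n"
    and Adef: "A = {x \<in> F_Gamma Z m I.
              (\<forall>(c, g) \<in> set ineqs. linform I c x \<ge> g) \<and>
              (\<forall>(c, r, n) \<in> set congs. modZ Z n (linform I c x) (of_int r))}"
begin

lemma finI: "finite I" using Isub finite_subset by blast

lemma A_sub: "A \<subseteq> PiE {1..m} (\<lambda>_. Gamma Z)"
  unfolding Adef F_Gamma_def Gamma_pow_def by auto

lemma A_supp: "x \<in> A \<Longrightarrow> supp m x = I"
  unfolding Adef F_Gamma_def by auto

lemma A_coord_I: assumes "x \<in> A" "i \<in> I" shows "\<exists>w\<in>Z. x i = Some w"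
proof -
  have "i \<in> {1..m}" using assms(2) Isub by auto
  then have "x i \<in> Gamma Z" using A_sub assms(1) by (auto simp: PiE_iff)
  moreover have "x i \<noteq> None" using A_supp[OF assms(1)] assms(2) by (auto simp: supp_def)
  ultimately show ?thesis by (auto simp: Gamma_def)
qed

lemma A_coord_notI: assumes "x \<in> A" "i \<in> {1..m}" "i \<notin> I" shows "x i = None"
  using A_supp[OF assms(1)] assms(2,3) by (auto simp: supp_def)

lemma linform_split:
  assumes "U \<subseteq> I"
  shows "linform I c x = (\<Sum>i\<in>U. of_int (c i) * the (x i)) + (\<Sum>i\<in>I - U. of_int (c i) * the (x i))"
  unfolding linform_def using sum.subset_diff[OF assms finI] by (simp add: add.commute)

lemma lift_dir:
  assumes x: "x \<in> A" and U: "U \<subseteq> I" and v: "\<forall>i\<in>U. 1 \<le> v i" "\<forall>(c, g)\<in>set ineqs. 0 \<le> (\<Sum>i\<in>U. c i * v i)"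
    and M: "M \<in> Z"
  shows "\<exists>x'\<in>A. (\<forall>i. i \<notin> U \<longrightarrow> x' i = x i) \<and> (\<forall>i\<in>U. \<exists>w. x' i = Some w \<and> M < w)"
proof -
  have finU: "finite U" using finI U finite_subset by blast
  define N :: nat where "N = (\<Prod>(c, r, n)\<in>set congs. n)"
  have ndvd: "n dvd N" if "(c, r, n) \<in> set congs" for c r n
    unfolding N_def using dvd_prodI[of "set congs" "(c, r, n)" "\<lambda>(c, r, n). n", OF _ that] by auto
  have Npos: "N \<ge> 1"
  proof -
    have "\<forall>p\<in>set congs. (case p of (c, r, n) \<Rightarrow> n) > 0" using congok by auto
    then have "N > 0" unfolding N_def by (intro prod_pos) auto
    then show ?thesis by simp
  qed
  define z where "z = \<bar>M\<bar> + (\<Sum>i\<in>U. \<bar>the (x i)\<bar>) + 1"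
  have xZ: "the (x i) \<in> Z" if "i \<in> I" for i using A_coord_I[OF x that] by auto
  have "(\<Sum>i\<in>U. \<bar>the (x i)\<bar>) \<in> Z"
  proof (rule zg_sum[OF Z])
    fix i assume "i \<in> U" then show "\<bar>the (x i)\<bar> \<in> Z" using U xZ zg_abs[OF Z] by blast
  qed
  then have zZ: "z \<in> Z" unfolding z_def using zg_add[OF Z] zg_abs[OF Z M] zg_1[OF Z] by blast
  have z0: "0 \<le> z" unfolding z_def by (simp add: sum_nonneg add_nonneg_nonneg)
  define d where "d i = of_int (int N * v i) * z" for i
  define x' where "x' = (\<lambda>i. if i \<in> U then Some (the (x i) + d i) else x i)"
  have dZ: "d i \<in> Z" for i unfolding d_def using zg_int_mult[OF Z zZ] .
  have big: "M < the (x i) + d i" if "i \<in> U" for i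
  proof -
    have "1 * 1 \<le> int N * v i" using v(1) that Npos by (intro mult_mono) auto
    then have "(1::'k) \<le> of_int (int N * v i)" by (metis mult_1 of_int_1 of_int_le_iff)
    then have "1 * z \<le> d i" unfolding d_def using z0 by (intro mult_right_mono)
    then have "z \<le> d i" by simp
    moreover have "\<bar>the (x i)\<bar> \<le> (\<Sum>i\<in>U. \<bar>the (x i)\<bar>)"
      using member_le_sum[of i U "\<lambda>i. \<bar>the (x i)\<bar>"] finU that by auto
    ultimately show ?thesis unfolding z_def by linarith
  qed
  have lin: "linform I c x' = linform I c x + of_int (int N * (\<Sum>i\<in>U. c i * v i)) * z" for c
  proof -
    have "linform I c x' = (\<Sum>i\<in>I. of_int (c i) * the (x i) + (if i \<in> U then of_int (c i) * d i else 0))"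
      unfolding linform_def x'_def by (intro sum.cong) (auto simp: algebra_simps)
    also have "\<dots> = linform I c x + (\<Sum>i\<in>I. if i \<in> U then of_int (c i) * d i else 0)"
      unfolding linform_def by (simp add: sum.distrib)
    also have "(\<Sum>i\<in>I. if i \<in> U then of_int (c i) * d i else 0) = (\<Sum>i\<in>I \<inter> U. of_int (c i) * d i)"
      using finI by (simp add: sum.inter_restrict)
    also have "I \<inter> U = U" using U by blast
    also have "(\<Sum>i\<in>U. of_int (c i) * d i) = of_int (int N * (\<Sum>i\<in>U. c i * v i)) * z"
      unfolding d_def by (simp add: sum_distrib_left sum_distrib_right algebra_simps)
    finally show ?thesis .
  qed
  have x'A: "x' \<in> A"
  proof -
    have "x' \<in> Gamma_pow Z m"
    proof -
      have "x \<in> Gamma_pow Z m" using x unfolding Adef F_Gamma_def by auto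
      then show ?thesis unfolding Gamma_pow_def x'_def using U Isub xZ dZ zg_add[OF Z]
        by (auto simp: PiE_iff Gamma_def extensional_def)
    qed
    moreover have "supp m x' = I"
    proof -
      have "supp m x = I" using A_supp[OF x] .
      then show ?thesis unfolding supp_def x'_def using U Isub by auto
    qed
    moreover have "linform I c x' \<ge> g" if "(c, g) \<in> set ineqs" for c g
    proof -
      have "linform I c x \<ge> g" using x that unfolding Adef by auto
      moreover have "0 \<le> (\<Sum>i\<in>U. c i * v i)" using v(2) that by auto
      then have "0 \<le> int N * (\<Sum>i\<in>U. c i * v i)" by simp
      then have "(0::'k) \<le> of_int (int N * (\<Sum>i\<in>U. c i * v i))" by (simp only: of_int_0_le_iff)
      then have "(0::'k) \<le> of_int (int N * (\<Sum>i\<in>U. c i * v i)) * z" using z0 by (rule mult_nonneg_nonneg)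
      ultimately show ?thesis unfolding lin by simp
    qed
    moreover have "modZ Z n (linform I c x') (of_int r)" if cin: "(c, r, n) \<in> set congs" for c r n
    proof -
      have "modZ Z n (linform I c x) (of_int r)" using x cin unfolding Adef by auto
      then obtain w where w: "w \<in> Z" "linform I c x - of_int r = of_nat n * w" unfolding modZ_def by blast
      obtain q where q: "N = n * q" using ndvd[OF cin] by blast
      have "linform I c x' - of_int r = of_nat n * (w + of_int (int q * (\<Sum>i\<in>U. c i * v i)) * z)"
        unfolding lin using w(2) q by (simp add: algebra_simps)
      moreover have "w + of_int (int q * (\<Sum>i\<in>U. c i * v i)) * z \<in> Z"
        using zg_add[OF Z w(1) zg_int_mult[OF Z zZ]] .
      ultimately show ?thesis unfolding modZ_def by blast
    qed
    ultimately show ?thesis unfolding Adef F_Gamma_def by auto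
  qed
  show ?thesis
    using x'A big by (intro bexI[of _ x']) (auto simp: x'_def)
qed

lemma clos_A_char: "a \<in> clos Z m A \<longleftrightarrow> a \<in> PiE {1..m} (\<lambda>_. Omega Z) \<and> approx Z m A a"
  using clos_char[OF Z A_sub] .

lemma clos_fin:
  assumes a: "a \<in> clos Z m A" and i: "i \<in> {1..m}" "a i \<noteq> None"
  shows "i \<in> I \<and> (\<exists>w\<in>Z. a i = Some w)"
proof -
  have ap: "approx Z m A a" using a clos_A_char by blast
  obtain x where x: "x \<in> A" "\<And>i. i \<in> {1..m} \<Longrightarrow> a i = None \<Longrightarrow> x i = None \<or> (\<exists>w. x i = Some w \<and> 0 < w)"
    "\<And>i. i \<in> {1..m} \<Longrightarrow> a i \<noteq> None \<Longrightarrow> x i = a i"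
    using approx_get[OF ap zg_0[OF Z]] by (elim exE conjE) (rule that, assumption, blast, blast)
  have xi: "x i = a i" using x(3) i by blast
  have "i \<in> I" using A_supp[OF x(1)] xi i unfolding supp_def by auto
  moreover have "\<exists>w\<in>Z. x i = Some w" using A_coord_I[OF x(1)] \<open>i \<in> I\<close> by blast
  ultimately show ?thesis using xi by simp
qed

lemma lift_point:
  assumes x1: "x1 \<in> A" and U: "U \<subseteq> I" and d: "dir ineqs U"
  defines "a \<equiv> restrict (\<lambda>i. if i \<in> U then None else x1 i) {1..m}"
  shows "a \<in> clos Z m A" "supp m a = I - U"
proof -
  obtain v where v: "\<forall>i\<in>U. 1 \<le> v i" "\<forall>(c, g)\<in>set ineqs. 0 \<le> (\<Sum>i\<in>U. c i * v i)"
    using d unfolding dir_def by blast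
  have x1G: "x1 \<in> PiE {1..m} (\<lambda>_. Gamma Z)" using x1 A_sub by blast
  have "a \<in> PiE {1..m} (\<lambda>_. Omega Z)"
  proof -
    have "x1 i \<in> Omega Z" if "i \<in> {1..m}" for i
    proof -
      have "x1 i \<in> Gamma Z" by (metis PiE_mem x1G that)
      then show ?thesis unfolding Gamma_def Omega_def using Z_sub_Qhull[of Z] by blast
    qed
    then show ?thesis unfolding a_def Omega_def by (auto simp: PiE_iff)
  qed
  moreover have "approx Z m A a"
    unfolding approx_def
  proof
    fix M assume M: "M \<in> Z"
    obtain x' where x': "x' \<in> A" "\<forall>i. i \<notin> U \<longrightarrow> x' i = x1 i" "\<forall>i\<in>U. \<exists>w. x' i = Some w \<and> M < w"
      using lift_dir[OF x1 U v M] by blast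
    show "\<exists>x\<in>A. \<forall>i\<in>{1..m}. (a i = None \<longrightarrow> x i = None \<or> (\<exists>w. x i = Some w \<and> M < w)) \<and> (a i \<noteq> None \<longrightarrow> x i = a i)"
    proof (intro bexI[OF _ x'(1)] ballI)
      fix i assume i: "i \<in> {1..m}"
      show "(a i = None \<longrightarrow> x' i = None \<or> (\<exists>w. x' i = Some w \<and> M < w)) \<and> (a i \<noteq> None \<longrightarrow> x' i = a i)"
      proof (cases "i \<in> U")
        case True
        then have "a i = None" using i unfolding a_def by simp
        then show ?thesis using x'(3) True by blast
      next
        case False
        then have "a i = x1 i" "x' i = x1 i" using i x'(2) unfolding a_def by auto
        then show ?thesis by simp
      qed
    qed
  qed
  ultimately show "a \<in> clos Z m A" using clos_A_char by blast
  have "supp m x1 = I" using A_supp[OF x1] .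
  then show "supp m a = I - U" unfolding supp_def a_def using U Isub by auto
qed

lemma clos_dir:
  assumes a: "a \<in> clos Z m A"
  shows "dir ineqs {i\<in>I. a i = None}"
proof -
  define W where "W = {i\<in>I. a i = None}"
  have WI: "W \<subseteq> I" unfolding W_def by blast
  have finW: "finite W" using finI WI finite_subset by blast
  have ap: "approx Z m A a" using a clos_A_char by blast
  have aZ: "the (a i) \<in> Z" if "i \<in> I - W" for i
  proof -
    have "i \<in> {1..m}" "a i \<noteq> None" using that Isub W_def by auto
    then obtain w where "w \<in> Z" "a i = Some w" using clos_fin[OF a] by blast
    then show ?thesis by simp
  qed
  define G where "G = (\<lambda>(c, g). (c, g - (\<Sum>i\<in>I - W. of_int (c i) * the (a i)))) ` set ineqs"
  have GZ: "\<forall>(c, g)\<in>G. g \<in> Z"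
  proof (clarify)
    fix c g assume "(c, g) \<in> G"
    then obtain g0 where g0: "(c, g0) \<in> set ineqs" "g = g0 - (\<Sum>i\<in>I - W. of_int (c i) * the (a i))"
      unfolding G_def by auto
    have "g0 \<in> Z" using ineqZ g0(1) by auto
    moreover have "(\<Sum>i\<in>I - W. of_int (c i) * the (a i)) \<in> Z"
      using aZ by (intro zg_sum[OF Z] zg_int_mult[OF Z]) auto
    ultimately show "g \<in> Z" using g0(2) zg_diff[OF Z] by simp
  qed
  have hyp: "\<forall>M\<in>Z. \<exists>u::nat \<Rightarrow> 'k. (\<forall>i\<in>W. M < u i) \<and> (\<forall>i\<in>{}. 0 \<le> u i)
                 \<and> (\<forall>(c, g)\<in>G. g \<le> lsum (W \<union> {}) c u)"
  proof
    fix M assume M: "M \<in> Z"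
    obtain x where x: "x \<in> A" "\<And>i. i \<in> {1..m} \<Longrightarrow> a i = None \<Longrightarrow> x i = None \<or> (\<exists>w. x i = Some w \<and> M < w)"
      "\<And>i. i \<in> {1..m} \<Longrightarrow> a i \<noteq> None \<Longrightarrow> x i = a i"
      using approx_get[OF ap M] by (elim exE conjE) (rule that, assumption, blast, blast)
    define u where "u i = the (x i)" for i
    have "M < u i" if "i \<in> W" for i
    proof -
      have i: "i \<in> {1..m}" "a i = None" "i \<in> I" using that W_def Isub by auto
      then have "x i \<noteq> None" using A_coord_I[OF x(1)] by auto
      then show ?thesis using x(2)[OF i(1,2)] unfolding u_def by auto
    qed
    moreover have "g \<le> lsum (W \<union> {}) c u" if cg: "(c, g) \<in> G" for c g
    proof -
      obtain g0 where g0: "(c, g0) \<in> set ineqs" "g = g0 - (\<Sum>i\<in>I - W. of_int (c i) * the (a i))"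
        using cg unfolding G_def by auto
      have "g0 \<le> linform I c x" using x(1) g0(1) unfolding Adef by auto
      also have "linform I c x = (\<Sum>i\<in>W. of_int (c i) * the (x i)) + (\<Sum>i\<in>I - W. of_int (c i) * the (x i))"
        by (rule linform_split[OF WI])
      also have "(\<Sum>i\<in>I - W. of_int (c i) * the (x i)) = (\<Sum>i\<in>I - W. of_int (c i) * the (a i))"
      proof (rule sum.cong)
        fix i assume "i \<in> I - W"
        then have "i \<in> {1..m}" "a i \<noteq> None" using Isub W_def by auto
        then show "of_int (c i) * the (x i) = of_int (c i) * the (a i)" using x(3) by simp
      qed simp
      finally show ?thesis using g0(2) unfolding lsum_def u_def by simp
    qed
    ultimately show "\<exists>u::nat \<Rightarrow> 'k. (\<forall>i\<in>W. M < u i) \<and> (\<forall>i\<in>{}. 0 \<le> u i)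
                 \<and> (\<forall>(c, g)\<in>G. g \<le> lsum (W \<union> {}) c u)" by blast
  qed
  obtain v where v: "\<forall>i\<in>W. 1 \<le> v i" "\<forall>(c, g)\<in>G. 0 \<le> (\<Sum>i\<in>W \<union> {}. c i * v i)"
    using key_lemma[OF Z finW finite.emptyI _ _ GZ hyp] unfolding G_def by auto
  have "\<forall>(c, g)\<in>set ineqs. 0 \<le> (\<Sum>i\<in>W. c i * v i)"
  proof (clarify)
    fix c g assume "(c, g) \<in> set ineqs"
    then have "(c, g - (\<Sum>i\<in>I - W. of_int (c i) * the (a i))) \<in> G" unfolding G_def by force
    then show "0 \<le> (\<Sum>i\<in>W. c i * v i)" using v(2) by auto
  qed
  then show ?thesis unfolding dir_def W_def[symmetric] using v(1) by blast
qed

lemma X_sub: "socle m ` A \<subseteq> PiE {1..m-1} (\<lambda>_. Gamma Z)"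
proof
  fix y assume "y \<in> socle m ` A"
  then obtain x where x: "x \<in> A" "y = socle m x" by blast
  have "x \<in> PiE {1..m} (\<lambda>_. Gamma Z)" using x(1) A_sub by blast
  then show "y \<in> PiE {1..m-1} (\<lambda>_. Gamma Z)" unfolding x(2) socle_def by (auto simp: PiE_iff)
qed

lemma clos_X_char: "b \<in> clos Z (m-1) (socle m ` A) \<longleftrightarrow> b \<in> PiE {1..m-1} (\<lambda>_. Omega Z) \<and> approx Z (m-1) (socle m ` A) b"
  using clos_char[OF Z X_sub] .

lemma supp_socle: "supp (m-1) (socle m a) = supp m a - {m}"
  unfolding supp_def socle_def using m1 by auto

lemma socle_clos:
  assumes a: "a \<in> clos Z m A" shows "socle m a \<in> clos Z (m-1) (socle m ` A)"
proof -
  have aP: "a \<in> PiE {1..m} (\<lambda>_. Omega Z)" and ap: "approx Z m A a" using a clos_A_char by auto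
  have "socle m a \<in> PiE {1..m-1} (\<lambda>_. Omega Z)" using aP unfolding socle_def by (auto simp: PiE_iff)
  moreover have "approx Z (m-1) (socle m ` A) (socle m a)"
    unfolding approx_def
  proof
    fix M assume M: "M \<in> Z"
    obtain x where x: "x \<in> A" "\<And>i. i \<in> {1..m} \<Longrightarrow> a i = None \<Longrightarrow> x i = None \<or> (\<exists>w. x i = Some w \<and> M < w)"
      "\<And>i. i \<in> {1..m} \<Longrightarrow> a i \<noteq> None \<Longrightarrow> x i = a i"
      using approx_get[OF ap M] by (elim exE conjE) (rule that, assumption, blast, blast)
    show "\<exists>y\<in>socle m ` A. \<forall>i\<in>{1..m-1}. (socle m a i = None \<longrightarrow> y i = None \<or> (\<exists>w. y i = Some w \<and> M < w))
        \<and> (socle m a i \<noteq> None \<longrightarrow> y i = socle m a i)"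
    proof (intro bexI[of _ "socle m x"] ballI)
      fix i assume i: "i \<in> {1..m-1}"
      then have i': "i \<in> {1..m}" by auto
      show "(socle m a i = None \<longrightarrow> socle m x i = None \<or> (\<exists>w. socle m x i = Some w \<and> M < w))
        \<and> (socle m a i \<noteq> None \<longrightarrow> socle m x i = socle m a i)"
        unfolding socle_def using i x(2,3)[OF i'] by simp
    qed (use x(1) in blast)
  qed
  ultimately show ?thesis using clos_X_char by blast
qed

lemma clos_ext: "a \<in> clos Z m A \<Longrightarrow> a \<in> PiE {1..m} (\<lambda>_. Omega Z)"
  using clos_A_char by blast

lemma supp_iff: "i \<in> supp k a \<longleftrightarrow> i \<in> {1..k} \<and> a i \<noteq> None"
  unfolding supp_def by simp

lemma part1_sub:
  "socle m ` F_face Z m J A \<subseteq> F_face Z (m-1) (J - {m}) (socle m ` A)"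
proof
  fix y assume "y \<in> socle m ` F_face Z m J A"
  then obtain a where a: "a \<in> clos Z m A" "supp m a = J" "y = socle m a" unfolding F_face_def by blast
  have "y \<in> clos Z (m-1) (socle m ` A)" using socle_clos[OF a(1)] a(3) by simp
  moreover have "supp (m-1) y = J - {m}" using supp_socle[of a] a(2,3) by simp
  ultimately show "y \<in> F_face Z (m-1) (J - {m}) (socle m ` A)" unfolding F_face_def by blast
qed

lemma part1:
  assumes ne: "F_face Z m J A \<noteq> {}"
  shows "socle m ` F_face Z m J A = F_face Z (m-1) (J - {m}) (socle m ` A)"
proof
  show "socle m ` F_face Z m J A \<subseteq> F_face Z (m-1) (J - {m}) (socle m ` A)"
    by (rule part1_sub)
next
  obtain a0 where a0: "a0 \<in> clos Z m A" "supp m a0 = J" using ne unfolding F_face_def by blast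
  have JI: "J \<subseteq> I"
  proof
    fix i assume "i \<in> J"
    then have "i \<in> {1..m}" "a0 i \<noteq> None" using a0(2) supp_iff[of i m a0] by auto
    then show "i \<in> I" using clos_fin[OF a0(1)] by blast
  qed
  have eqIJ: "{i\<in>I. a0 i = None} = I - J"
  proof (intro set_eqI iffI)
    fix i assume "i \<in> {i\<in>I. a0 i = None}"
    then have "i \<in> I" "a0 i = None" by auto
    then have "i \<notin> supp m a0" using supp_iff[of i m a0] by blast
    then show "i \<in> I - J" using a0(2) \<open>i \<in> I\<close> by blast
  next
    fix i assume "i \<in> I - J"
    then have "i \<in> I" "i \<notin> supp m a0" using a0(2) by auto
    moreover have "i \<in> {1..m}" using \<open>i \<in> I\<close> Isub by blast
    ultimately show "i \<in> {i\<in>I. a0 i = None}" using supp_iff[of i m a0] by blast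
  qed
  have d: "dir ineqs (I - J)" using clos_dir[OF a0(1)] unfolding eqIJ .
  show "F_face Z (m-1) (J - {m}) (socle m ` A) \<subseteq> socle m ` F_face Z m J A"
  proof
    fix b assume "b \<in> F_face Z (m-1) (J - {m}) (socle m ` A)"
    then have b: "b \<in> clos Z (m-1) (socle m ` A)" "supp (m-1) b = J - {m}" unfolding F_face_def by auto
    have bP: "b \<in> PiE {1..m-1} (\<lambda>_. Omega Z)" and bap: "approx Z (m-1) (socle m ` A) b"
      using b(1) clos_X_char by auto
    obtain y where y: "y \<in> socle m ` A" "\<forall>i. i \<in> {1..m-1} \<longrightarrow> b i \<noteq> None \<longrightarrow> y i = b i"
      using approx_get[OF bap zg_0[OF Z]] by blast
    obtain x1 where x1: "x1 \<in> A" "y = socle m x1" using y(1) by blast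
    define a where "a = restrict (\<lambda>i. if i \<in> I - J then None else x1 i) {1..m}"
    have aC: "a \<in> clos Z m A" and aS: "supp m a = I - (I - J)"
      using lift_point[OF x1(1) _ d] unfolding a_def by auto
    have "supp m a = J" using aS JI by blast
    moreover have "socle m a = b"
    proof
      fix i
      show "socle m a i = b i"
      proof (cases "i \<in> {1..m-1}")
        case False
        then have "b i = undefined" using bP unfolding PiE_def extensional_def by blast
        moreover have "socle m a i = undefined" using False unfolding socle_def restrict_def by (simp only: if_False)
        ultimately show ?thesis by simp
      next
        case True
        then have im: "i \<in> {1..m}" "i \<noteq> m" by auto
        have sa: "socle m a i = (if i \<in> I - J then None else x1 i)"
          using True im unfolding socle_def a_def by simp
        have bi: "b i \<noteq> None \<longleftrightarrow> i \<in> J"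
          using supp_iff[of i "m-1" b] b(2) True im by blast
        show ?thesis
        proof (cases "i \<in> J")
          case iJ: True
          then have "b i \<noteq> None" using bi by blast
          then have "y i = b i" using y(2) True by blast
          moreover have "y i = x1 i" using x1(2) True unfolding socle_def by simp
          ultimately have "x1 i = b i" by metis
          then show ?thesis using sa iJ by simp
        next
          case nJ: False
          then have bN: "b i = None" using bi by blast
          show ?thesis
          proof (cases "i \<in> I")
            case True then show ?thesis using sa nJ bN by simp
          next
            case False
            then have "x1 i = None" using A_coord_notI[OF x1(1) im(1)] by simp
            then show ?thesis using sa bN by simp
          qed
        qed
      qed
    qed
    ultimately show "b \<in> socle m ` F_face Z m J A" unfolding F_face_def using aC by blast
  qed
qed

lemma part2:
  assumes nn: "nonneg m A" and b: "b \<in> clos Z (m-1) (socle m ` A)"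
  shows "\<exists>J. F_face Z m J A \<noteq> {} \<and> J - {m} = supp (m-1) b"
proof -
  have bP: "b \<in> PiE {1..m-1} (\<lambda>_. Omega Z)" and bap: "approx Z (m-1) (socle m ` A) b"
    using b clos_X_char by auto
  define W where "W = {i \<in> I - {m}. b i = None}"
  define T where "T = I \<inter> {m}"
  have Im: "i \<in> {1..m-1}" if "i \<in> I - {m}" for i
  proof -
    have "i \<in> {1..m}" "i \<noteq> m" using that Isub by auto
    then show ?thesis by auto
  qed
  have WI: "W \<subseteq> I" "T \<subseteq> I" unfolding W_def T_def by auto
  have finW: "finite W" "finite T" using WI finI finite_subset by blast+
  have WT: "W \<inter> T = {}" unfolding W_def T_def by auto
  have WTI: "W \<union> T \<subseteq> I" using WI by blast
  have R: "I - (W \<union> T) = {i \<in> I - {m}. b i \<noteq> None}" unfolding W_def T_def by auto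
  obtain y0 where y0: "y0 \<in> socle m ` A" "\<forall>i. i \<in> {1..m-1} \<longrightarrow> b i \<noteq> None \<longrightarrow> y0 i = b i"
    using approx_get[OF bap zg_0[OF Z]] by blast
  obtain x0 where x0: "x0 \<in> A" "y0 = socle m x0" using y0(1) by blast
  have x0b: "x0 i = b i" if "i \<in> {1..m-1}" "b i \<noteq> None" for i
  proof -
    have "y0 i = b i" using y0(2) that by blast
    moreover have "y0 i = x0 i" using x0(2) that(1) unfolding socle_def by simp
    ultimately show ?thesis by metis
  qed
  have bZ: "the (b i) \<in> Z" if "i \<in> I - (W \<union> T)" for i
  proof -
    have i: "i \<in> I" "i \<in> {1..m-1}" "b i \<noteq> None" using that R Im by auto
    then obtain w where "w \<in> Z" "x0 i = Some w" using A_coord_I[OF x0(1)] by blast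
    then show ?thesis using x0b[OF i(2,3)] by simp
  qed
  have supb: "supp (m-1) b = {i \<in> I - {m}. b i \<noteq> None}"
  proof (intro set_eqI iffI)
    fix i assume "i \<in> supp (m-1) b"
    then have i: "i \<in> {1..m-1}" "b i \<noteq> None" using supp_iff[of i "m-1" b] by auto
    then have "x0 i \<noteq> None" using x0b by simp
    moreover have "i \<in> {1..m}" "i \<noteq> m" using i(1) by auto
    ultimately have "i \<in> I" using A_coord_notI[OF x0(1)] by metis
    then show "i \<in> {i \<in> I - {m}. b i \<noteq> None}" using i \<open>i \<noteq> m\<close> by blast
  next
    fix i assume "i \<in> {i \<in> I - {m}. b i \<noteq> None}"
    then show "i \<in> supp (m-1) b" using Im supp_iff[of i "m-1" b] by blast
  qed
  define G where "G = (\<lambda>(c, g). (c, g - (\<Sum>i\<in>I - (W \<union> T). of_int (c i) * the (b i)))) ` set ineqs"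
  have GZ: "\<forall>(c, g)\<in>G. g \<in> Z"
  proof (clarify)
    fix c g assume "(c, g) \<in> G"
    then obtain g0 where g0: "(c, g0) \<in> set ineqs" "g = g0 - (\<Sum>i\<in>I - (W \<union> T). of_int (c i) * the (b i))"
      unfolding G_def by auto
    have "g0 \<in> Z" using ineqZ g0(1) by auto
    moreover have "(\<Sum>i\<in>I - (W \<union> T). of_int (c i) * the (b i)) \<in> Z"
      using bZ by (intro zg_sum[OF Z] zg_int_mult[OF Z]) auto
    ultimately show "g \<in> Z" using g0(2) zg_diff[OF Z] by simp
  qed
  have hyp: "\<forall>M\<in>Z. \<exists>u::nat \<Rightarrow> 'k. (\<forall>i\<in>W. M < u i) \<and> (\<forall>i\<in>T. 0 \<le> u i)
                 \<and> (\<forall>(c, g)\<in>G. g \<le> lsum (W \<union> T) c u)"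
  proof
    fix M assume M: "M \<in> Z"
    obtain y where y: "y \<in> socle m ` A" "\<forall>i. i \<in> {1..m-1} \<longrightarrow> b i = None \<longrightarrow> y i = None \<or> (\<exists>w. y i = Some w \<and> M < w)"
      "\<forall>i. i \<in> {1..m-1} \<longrightarrow> b i \<noteq> None \<longrightarrow> y i = b i"
      using approx_get[OF bap M] by blast
    obtain x where x: "x \<in> A" "y = socle m x" using y(1) by blast
    have yx: "y i = x i" if "i \<in> {1..m-1}" for i using x(2) that unfolding socle_def by simp
    define u where "u i = the (x i)" for i
    have "M < u i" if "i \<in> W" for i
    proof -
      have i: "i \<in> {1..m-1}" "b i = None" "i \<in> I" using that W_def Im by auto
      then have "x i \<noteq> None" using A_coord_I[OF x(1)] by auto
      then show ?thesis using y(2) i yx[OF i(1)] unfolding u_def by auto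
    qed
    moreover have "0 \<le> u i" if "i \<in> T" for i
    proof -
      have i: "i = m" "m \<in> I" using that T_def by auto
      then obtain w where w: "x m = Some w" using A_coord_I[OF x(1)] by blast
      have "m \<in> {1..m}" using m1 by simp
      have "\<forall>a\<in>A. \<forall>i\<in>{1..m}. \<forall>v. a i = Some v \<longrightarrow> 0 \<le> v" using nn unfolding nonneg_def .
      then have "\<forall>v. x m = Some v \<longrightarrow> 0 \<le> v" using x(1) \<open>m \<in> {1..m}\<close> by blast
      then have "0 \<le> w" using w by blast
      then show ?thesis unfolding u_def using w i by simp
    qed
    moreover have "g \<le> lsum (W \<union> T) c u" if cg: "(c, g) \<in> G" for c g
    proof -
      obtain g0 where g0: "(c, g0) \<in> set ineqs" "g = g0 - (\<Sum>i\<in>I - (W \<union> T). of_int (c i) * the (b i))"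
        using cg unfolding G_def by auto
      have "g0 \<le> linform I c x" using x(1) g0(1) unfolding Adef by auto
      also have "linform I c x = (\<Sum>i\<in>W \<union> T. of_int (c i) * the (x i)) + (\<Sum>i\<in>I - (W \<union> T). of_int (c i) * the (x i))"
        by (rule linform_split[OF WTI])
      also have "(\<Sum>i\<in>I - (W \<union> T). of_int (c i) * the (x i)) = (\<Sum>i\<in>I - (W \<union> T). of_int (c i) * the (b i))"
      proof (rule sum.cong)
        fix i assume "i \<in> I - (W \<union> T)"
        then have i: "i \<in> {1..m-1}" "b i \<noteq> None" using R Im by auto
        then have "x i = b i" using y(3) yx[OF i(1)] by metis
        then show "of_int (c i) * the (x i) = of_int (c i) * the (b i)" by simp
      qed simp
      finally show ?thesis using g0(2) unfolding lsum_def u_def by simp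
    qed
    ultimately have h1: "\<forall>i\<in>W. M < u i" and h2: "\<forall>i\<in>T. 0 \<le> u i"
      and h3: "\<forall>(c, g)\<in>G. g \<le> lsum (W \<union> T) c u" by auto
    show "\<exists>u::nat \<Rightarrow> 'k. (\<forall>i\<in>W. M < u i) \<and> (\<forall>i\<in>T. 0 \<le> u i)
                 \<and> (\<forall>(c, g)\<in>G. g \<le> lsum (W \<union> T) c u)" using h1 h2 h3 by (intro exI[of _ u]) simp
  qed
  have finG: "finite G" unfolding G_def by simp
  obtain v where v: "\<forall>i\<in>W. 1 \<le> v i" "\<forall>i\<in>T. 0 \<le> v i" "\<forall>(c, g)\<in>G. 0 \<le> (\<Sum>i\<in>W \<union> T. c i * v i)"
    using key_lemma[OF Z finW WT finG GZ hyp] by blast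
  have vI: "0 \<le> (\<Sum>i\<in>W \<union> T. c i * v i)" if cgi: "(c, g) \<in> set ineqs" for c g
  proof -
    have "(c, g - (\<Sum>i\<in>I - (W \<union> T). of_int (c i) * the (b i))) \<in> G" unfolding G_def
      by (rule image_eqI[of _ _ "(c, g)"]) (simp_all add: cgi)
    from bspec[OF v(3) this] show ?thesis by simp
  qed
  have "\<exists>U. (U = W \<or> U = W \<union> T) \<and> dir ineqs U"
  proof (cases "T = {} \<or> v m = 0")
    case True
    have "(\<Sum>i\<in>W \<union> T. c i * v i) = (\<Sum>i\<in>W. c i * v i)" for c
    proof -
      have "(\<Sum>i\<in>W \<union> T. c i * v i) = (\<Sum>i\<in>W. c i * v i) + (\<Sum>i\<in>T. c i * v i)"
        using finW WT by (simp add: sum.union_disjoint)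
      moreover have "(\<Sum>i\<in>T. c i * v i) = 0" using True T_def by (cases "T = {}") auto
      ultimately show ?thesis by simp
    qed
    then have "dir ineqs W" unfolding dir_def using v(1) vI by auto
    then show ?thesis by blast
  next
    case False
    then have "T = {m}" "v m \<ge> 1" using v(2) T_def by auto
    then have "\<forall>i\<in>W \<union> T. 1 \<le> v i" using v(1) by auto
    then have "dir ineqs (W \<union> T)" unfolding dir_def using vI by auto
    then show ?thesis by blast
  qed
  then obtain U where U: "U = W \<or> U = W \<union> T" "dir ineqs U" by blast
  have UI: "U \<subseteq> I" using U(1) WI by blast
  define a where "a = restrict (\<lambda>i. if i \<in> U then None else x0 i) {1..m}"
  have aC: "a \<in> clos Z m A" and aS: "supp m a = I - U"
    using lift_point[OF x0(1) UI U(2)] unfolding a_def by auto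
  have "F_face Z m (I - U) A \<noteq> {}" using aC aS unfolding F_face_def by blast
  moreover have "(I - U) - {m} = supp (m-1) b"
    unfolding supb using U(1) unfolding W_def T_def by auto
  ultimately show ?thesis by blast
qed

lemma socle_upd: assumes "a \<in> extensional {1..m}" shows "(socle m a)(m := a m) = a"
proof
  fix i
  show "((socle m a)(m := a m)) i = a i"
  proof (cases "i = m")
    case True then show ?thesis by simp
  next
    case False
    show ?thesis
    proof (cases "i \<in> {1..m-1}")
      case True then show ?thesis using False unfolding socle_def by simp
    next
      case nin: False
      then have "i \<notin> {1..m}" using False by auto
      then have "a i = undefined" using assms unfolding extensional_def by blast
      moreover have "socle m a i = undefined" using nin unfolding socle_def restrict_def by (simp only: if_False)
      ultimately show ?thesis using False by simp
    qed
  qed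
qed

lemma clos_extensional: "a \<in> clos Z m A \<Longrightarrow> a \<in> extensional {1..m}"
  using clos_ext unfolding PiE_def by blast

lemma desc_none:
  assumes "m \<notin> J"
  shows "F_face Z m J A = (\<lambda>y. y(m := None)) ` (socle m ` F_face Z m J A)"
proof -
  have eq: "(socle m a)(m := None) = a" if "a \<in> F_face Z m J A" for a
  proof -
    have a: "a \<in> clos Z m A" "supp m a = J" using that unfolding F_face_def by auto
    have "m \<in> {1..m}" using m1 by simp
    then have "a m = None" using a(2) assms supp_iff[of m m a] by blast
    then show ?thesis using socle_upd[OF clos_extensional[OF a(1)]] by simp
  qed
  show ?thesis
  proof
    show "F_face Z m J A \<subseteq> (\<lambda>y. y(m := None)) ` (socle m ` F_face Z m J A)"
    proof
      fix a assume "a \<in> F_face Z m J A"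
      then show "a \<in> (\<lambda>y. y(m := None)) ` (socle m ` F_face Z m J A)"
        using eq[of a] by (metis image_eqI)
    qed
  next
    show "(\<lambda>y. y(m := None)) ` (socle m ` F_face Z m J A) \<subseteq> F_face Z m J A"
      using eq by auto
  qed
qed

lemma desc_some:
  assumes "m \<in> J"
  shows "F_face Z m J A = {y(m := Some z) | y z. y \<in> socle m ` F_face Z m J A \<and> z \<in> Z} \<inter> clos Z m A"
proof
  show "F_face Z m J A \<subseteq> {y(m := Some z) | y z. y \<in> socle m ` F_face Z m J A \<and> z \<in> Z} \<inter> clos Z m A"
  proof
    fix a assume aF: "a \<in> F_face Z m J A"
    then have a: "a \<in> clos Z m A" "supp m a = J" unfolding F_face_def by auto
    have "m \<in> {1..m}" using m1 by simp
    then have "a m \<noteq> None" using a(2) assms supp_iff[of m m a] by blast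
    then obtain w where w: "w \<in> Z" "a m = Some w" using clos_fin[OF a(1) \<open>m \<in> {1..m}\<close>] by blast
    have "a = (socle m a)(m := Some w)" using socle_upd[OF clos_extensional[OF a(1)]] w(2) by simp
    moreover have "socle m a \<in> socle m ` F_face Z m J A" using aF by blast
    ultimately show "a \<in> {y(m := Some z) | y z. y \<in> socle m ` F_face Z m J A \<and> z \<in> Z} \<inter> clos Z m A"
      using w(1) a(1) by blast
  qed
next
  show "{y(m := Some z) | y z. y \<in> socle m ` F_face Z m J A \<and> z \<in> Z} \<inter> clos Z m A \<subseteq> F_face Z m J A"
  proof
    fix p assume "p \<in> {y(m := Some z) | y z. y \<in> socle m ` F_face Z m J A \<and> z \<in> Z} \<inter> clos Z m A"
    then obtain a z where pa: "p = (socle m a)(m := Some z)" "a \<in> F_face Z m J A" "p \<in> clos Z m A" by blast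
    have sa: "supp m a = J" using pa(2) unfolding F_face_def by auto
    have "supp m p = J"
    proof (intro set_eqI)
      fix i
      show "i \<in> supp m p \<longleftrightarrow> i \<in> J"
      proof (cases "i = m")
        case True then show ?thesis using assms m1 pa(1) supp_iff[of i m p] by simp
      next
        case False
        then have "p i = socle m a i" using pa(1) by simp
        show ?thesis
        proof (cases "i \<in> {1..m}")
          case True
          then have "i \<in> {1..m-1}" using False by auto
          then have "p i = a i" using \<open>p i = socle m a i\<close> unfolding socle_def by simp
          then show ?thesis using True supp_iff[of i m p] supp_iff[of i m a] sa by simp
        next
          case False
          then have "i \<notin> supp m p" "i \<notin> supp m a" using supp_iff by blast+
          then show ?thesis using sa by blast
        qed
      qed
    qed
    then show "p \<in> F_face Z m J A" using pa(3) unfolding F_face_def by blast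
  qed
qed

end

theorem proposition3p7:
  fixes Z :: "'k::linordered_field set"
    and m :: nat and I :: "nat set" and A :: "(nat \<Rightarrow> 'k option) set"
  assumes "zgroup Z" and "m \<ge> 1" and "I \<subseteq> {1..m}"
    and "basic_presburger Z m I A"
  shows "(\<forall>J. is_face Z m A (F_face Z m J A) \<longrightarrow>
            socle m ` F_face Z m J A = F_face Z (m - 1) (J - {m}) (socle m ` A)
          \<and> is_face Z (m - 1) (socle m ` A) (F_face Z (m - 1) (J - {m}) (socle m ` A)))
       \<and> (nonneg m A \<longrightarrow>
          (\<forall>Y. is_face Z (m - 1) (socle m ` A) Y \<longrightarrow>
             (\<exists>J B. B = F_face Z m J A \<and> is_face Z m A B \<and> socle m ` B = Y
                \<and> (m \<notin> J \<longrightarrow> B = (\<lambda>y. y(m := None)) ` Y)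
                \<and> (m \<in> J \<longrightarrow> B = {y(m := Some z) | y z. y \<in> Y \<and> z \<in> Z} \<inter> clos Z m A))))"
proof -
  obtain ineqs :: "((nat \<Rightarrow> int) \<times> 'k) list" and congs :: "((nat \<Rightarrow> int) \<times> int \<times> nat) list" where
    pr: "\<forall>(c, g) \<in> set ineqs. g \<in> Z" "\<forall>(c, r, n) \<in> set congs. 0 \<le> r \<and> r < int n"
       "A = {x \<in> F_Gamma Z m I.
              (\<forall>(c, g) \<in> set ineqs. linform I c x \<ge> g) \<and>
              (\<forall>(c, r, n) \<in> set congs. modZ Z n (linform I c x) (of_int r))}"
    using assms(4) unfolding basic_presburger_def by blast
  interpret P: presb Z m I ineqs congs A
    using assms(1,2,3) pr by unfold_locales auto
  have first: "socle m ` F_face Z m J A = F_face Z (m - 1) (J - {m}) (socle m ` A)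
          \<and> is_face Z (m - 1) (socle m ` A) (F_face Z (m - 1) (J - {m}) (socle m ` A))"
    if "is_face Z m A (F_face Z m J A)" for J
  proof -
    have ne: "F_face Z m J A \<noteq> {}" using that unfolding is_face_def by blast
    have eq: "socle m ` F_face Z m J A = F_face Z (m - 1) (J - {m}) (socle m ` A)" by (rule P.part1[OF ne])
    have "F_face Z (m - 1) (J - {m}) (socle m ` A) \<noteq> {}" using ne eq by blast
    then show ?thesis using eq unfolding is_face_def by blast
  qed
  have second: "\<exists>J B. B = F_face Z m J A \<and> is_face Z m A B \<and> socle m ` B = Y
                \<and> (m \<notin> J \<longrightarrow> B = (\<lambda>y. y(m := None)) ` Y)
                \<and> (m \<in> J \<longrightarrow> B = {y(m := Some z) | y z. y \<in> Y \<and> z \<in> Z} \<inter> clos Z m A)"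
    if nn: "nonneg m A" and Yf: "is_face Z (m - 1) (socle m ` A) Y" for Y
  proof -
    obtain J' where J': "Y = F_face Z (m - 1) J' (socle m ` A)" "Y \<noteq> {}" using Yf unfolding is_face_def by blast
    then obtain b where b: "b \<in> clos Z (m - 1) (socle m ` A)" "supp (m - 1) b = J'" unfolding F_face_def by blast
    obtain J where J: "F_face Z m J A \<noteq> {}" "J - {m} = supp (m - 1) b" using P.part2[OF nn b(1)] by blast
    have sB: "socle m ` F_face Z m J A = Y" using P.part1[OF J(1)] J(2) b(2) J'(1) by simp
    have "is_face Z m A (F_face Z m J A)" using J(1) unfolding is_face_def by blast
    moreover have "m \<notin> J \<longrightarrow> F_face Z m J A = (\<lambda>y. y(m := None)) ` Y"
    proof
      assume "m \<notin> J"
      from P.desc_none[OF this] sB show "F_face Z m J A = (\<lambda>y. y(m := None)) ` Y" by simp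
    qed
    moreover have "m \<in> J \<longrightarrow> F_face Z m J A = {y(m := Some z) | y z. y \<in> Y \<and> z \<in> Z} \<inter> clos Z m A"
    proof
      assume "m \<in> J"
      from P.desc_some[OF this] sB show "F_face Z m J A = {y(m := Some z) | y z. y \<in> Y \<and> z \<in> Z} \<inter> clos Z m A" by simp
    qed
    ultimately show ?thesis using sB by blast
  qed
  show ?thesis using first second by blast
qed

end
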